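(* For every dyadic strip $D\in\mathcal D$ and every dyadic tree $T\in\mathcal T$, $$\mu(D)=\sigma(D)=|\pi(D)|,\qquad \nu(T)=\tau(T)=|\pi(T)|,$$ where $\pi$ is the projection onto the first coordinate and $|\cdot|$ is Lebesgue measure. Moreover, for every $T\in\mathcal T$, $\nu(T)=|\pi(T)|=|\pi(D(T))|=\mu(D(T))$, where $D(T)=\pi(T)\times(0,|\pi(T)|]\times\mathbb R\in\mathcal D$.
   Context: Dyadic intervals: $I(m,l)=(2^lm,2^l(m+1)]$. Tiles: $H(m,l,n)=I(m,l)\times(2^{l-1},2^l]\times I(n,-l)$. Strips $D(m,l)=I(m,l)\times(0,2^l]\times\mathbb R$ form $\mathcal D$, with $\sigma(D(m,l))=2^l$. Trees $T(m,l,n)=\bigcup_{l'\le l}\bigcup_{m':\,I(m',l')\subseteq I(m,l)}H(m',l',N(n,l'))$, with $N(n,l')$ the integer such that $I(n,-l)\subseteq I(N(n,l'),-l')$, form $\mathcal T$, with $\tau(T(m,l,n))=2^l$. On $X=\mathbb R\times(0,\infty)\times\mathbb R$, $\mu(A)=\inf\{\sum_{S\in\mathcal S'}\sigma(S):\mathcal S'\subseteq\mathcal D,\ A\subseteq\bigcup\mathcal S'\}$ and $\nu(A)=\inf\{\sum_{S\in\mathcal S'}\tau(S):\mathcal S'\subseteq\mathcal T,\ A\subseteq\bigcup\mathcal S'\}$. *)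

theory Defs
  imports "HOL-Analysis.Analysis"
begin

type_synonym point = "real \<times> real \<times> real"

definition dyI :: "int \<Rightarrow> int \<Rightarrow> real set" where
  "dyI m l = {2 powr (real_of_int l) * real_of_int m <.. 2 powr (real_of_int l) * real_of_int (m + 1)}"

definition tile :: "int \<Rightarrow> int \<Rightarrow> int \<Rightarrow> point set" where
  "tile m l n = dyI m l \<times> ({2 powr (real_of_int (l - 1)) <.. 2 powr (real_of_int l)} \<times> dyI n (- l))"

definition strip :: "int \<Rightarrow> int \<Rightarrow> point set" where
  "strip m l = dyI m l \<times> ({0 <.. 2 powr (real_of_int l)} \<times> (UNIV :: real set))"

definition Nidx :: "int \<Rightarrow> int \<Rightarrow> int \<Rightarrow> int" where
  "Nidx n l l' = (THE N. dyI n (- l) \<subseteq> dyI N (- l'))"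

definition tree :: "int \<Rightarrow> int \<Rightarrow> int \<Rightarrow> point set" where
  "tree m l n = (\<Union>l'\<in>{l'. l' \<le> l}. \<Union>m'\<in>{m'. dyI m' l' \<subseteq> dyI m l}. tile m' l' (Nidx n l l'))"

definition strips :: "point set set" where
  "strips = {strip m l | m l. True}"

definition trees :: "point set set" where
  "trees = {tree m l n | m l n. True}"

text \<open>sigma(D(m,l)) = 2^l and tau(T(m,l,n)) = 2^l; collections of strips / trees
  are given by their (injective) parameter sets.\<close>
definition mu :: "point set \<Rightarrow> ennreal" where
  "mu A = (INF P \<in> {P :: (int \<times> int) set. A \<subseteq> (\<Union>(m, l)\<in>P. strip m l)}.
             \<Sum>\<^sub>\<infinity>(m, l)\<in>P. ennreal (2 powr (real_of_int l)))"

definition nu :: "point set \<Rightarrow> ennreal" where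
  "nu A = (INF P \<in> {P :: (int \<times> int \<times> int) set. A \<subseteq> (\<Union>(m, l, n)\<in>P. tree m l n)}.
             \<Sum>\<^sub>\<infinity>(m, l, n)\<in>P. ennreal (2 powr (real_of_int l)))"

definition proj :: "point set \<Rightarrow> real set" where
  "proj A = fst ` A"

definition stripOf :: "point set \<Rightarrow> point set" where
  "stripOf T = proj T \<times> ({0 <.. measure lborel (proj T)} \<times> (UNIV :: real set))"

end

theory Submission
  imports Defs
begin

lemma ennreal_infsum_ge:
  fixes f :: "'a \<Rightarrow> ennreal"
  assumes "a \<in> P"
  shows "f a \<le> infsum f P"
proof -
  have "infsum f P = (SUP F\<in>{F. finite F \<and> F\<subseteq>P}. sum f F)"
    by (rule nonneg_infsum_complete) simp
  moreover have "sum f {a} \<le> (SUP F\<in>{F. finite F \<and> F\<subseteq>P}. sum f F)"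
    by (rule SUP_upper) (use assms in auto)
  ultimately show ?thesis by simp
qed

lemma right_in_dyI: "2 powr (real_of_int l) * real_of_int (m + 1) \<in> dyI m l"
  unfolding dyI_def by (auto simp: algebra_simps)

lemma dyI_ne: "dyI m l \<noteq> {}"
  using right_in_dyI by blast

lemma meas_dyI: "emeasure lborel (dyI m l) = ennreal (2 powr (real_of_int l))"
proof -
  have "2 powr (real_of_int l) * real_of_int m \<le> 2 powr (real_of_int l) * real_of_int (m + 1)"
    by (intro mult_left_mono) auto
  then show ?thesis unfolding dyI_def by (simp add: algebra_simps)
qed

lemma proj_strip: "proj (strip m l) = dyI m l"
  unfolding proj_def strip_def by force

lemma proj_tree: "proj (tree m l n) = dyI m l"
proof
  show "proj (tree m l n) \<subseteq> dyI m l"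
    unfolding proj_def tree_def tile_def by auto
next
  show "dyI m l \<subseteq> proj (tree m l n)"
  proof
    fix x assume x: "x \<in> dyI m l"
    obtain y where y: "y \<in> dyI (Nidx n l l) (- l)" using dyI_ne by blast
    have "(x, 2 powr (real_of_int l), y) \<in> tile m l (Nidx n l l)"
      unfolding tile_def using x y by auto
    then have "(x, 2 powr (real_of_int l), y) \<in> tree m l n"
      unfolding tree_def by blast
    then show "x \<in> proj (tree m l n)" unfolding proj_def by force
  qed
qed

lemma mu_strip: "mu (strip m l) = ennreal (2 powr (real_of_int l))"
proof (rule antisym)
  have "mu (strip m l) \<le> (\<Sum>\<^sub>\<infinity>(m', l')\<in>{(m,l)}. ennreal (2 powr (real_of_int l')))"
    unfolding mu_def by (rule INF_lower) auto
  then show "mu (strip m l) \<le> ennreal (2 powr (real_of_int l))" by simp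
next
  show "ennreal (2 powr (real_of_int l)) \<le> mu (strip m l)"
    unfolding mu_def
  proof (rule INF_greatest)
    fix P assume "P \<in> {P :: (int \<times> int) set. strip m l \<subseteq> (\<Union>(m, l)\<in>P. strip m l)}"
    then have cov: "strip m l \<subseteq> (\<Union>(m, l)\<in>P. strip m l)" by simp
    obtain x where x: "x \<in> dyI m l" using dyI_ne by blast
    have "(x, 2 powr (real_of_int l), 0) \<in> strip m l" unfolding strip_def using x by auto
    with cov obtain m' l' where ml: "(m', l') \<in> P" and
      p: "(x, 2 powr (real_of_int l), 0) \<in> strip m' l'" by blast
    from p have "2 powr (real_of_int l) \<le> 2 powr (real_of_int l')" unfolding strip_def by auto
    then have "ennreal (2 powr (real_of_int l)) \<le> (\<lambda>(m, l). ennreal (2 powr (real_of_int l))) (m', l')"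
      by (simp add: ennreal_leI)
    also have "\<dots> \<le> (\<Sum>\<^sub>\<infinity>(m, l)\<in>P. ennreal (2 powr (real_of_int l)))"
      by (rule ennreal_infsum_ge[OF ml])
    finally show "ennreal (2 powr (real_of_int l)) \<le> (\<Sum>\<^sub>\<infinity>(m, l)\<in>P. ennreal (2 powr (real_of_int l)))" .
  qed
qed

lemma nu_tree: "nu (tree m l n) = ennreal (2 powr (real_of_int l))"
proof (rule antisym)
  have "nu (tree m l n) \<le> (\<Sum>\<^sub>\<infinity>(m', l', n')\<in>{(m,l,n)}. ennreal (2 powr (real_of_int l')))"
    unfolding nu_def by (rule INF_lower) auto
  then show "nu (tree m l n) \<le> ennreal (2 powr (real_of_int l))" by simp
next
  show "ennreal (2 powr (real_of_int l)) \<le> nu (tree m l n)"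
    unfolding nu_def
  proof (rule INF_greatest)
    fix P assume "P \<in> {P :: (int \<times> int \<times> int) set. tree m l n \<subseteq> (\<Union>(m, l, n)\<in>P. tree m l n)}"
    then have cov: "tree m l n \<subseteq> (\<Union>(m, l, n)\<in>P. tree m l n)" by simp
    obtain x where x: "x \<in> dyI m l" using dyI_ne by blast
    obtain y where y: "y \<in> dyI (Nidx n l l) (- l)" using dyI_ne by blast
    have "(x, 2 powr (real_of_int l), y) \<in> tile m l (Nidx n l l)"
      unfolding tile_def using x y by auto
    then have "(x, 2 powr (real_of_int l), y) \<in> tree m l n"
      unfolding tree_def by blast
    with cov obtain m' l' n' where ml: "(m', l', n') \<in> P" and
      p: "(x, 2 powr (real_of_int l), y) \<in> tree m' l' n'" by blast
    from p obtain l'' m'' where l'': "l'' \<le> l'" and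
      q: "(x, 2 powr (real_of_int l), y) \<in> tile m'' l'' (Nidx n' l' l'')"
      unfolding tree_def by blast
    from q have "2 powr (real_of_int l) \<le> 2 powr (real_of_int l'')" unfolding tile_def by auto
    then have "l \<le> l''" by simp
    with l'' have "2 powr (real_of_int l) \<le> 2 powr (real_of_int l')" by simp
    then have "ennreal (2 powr (real_of_int l)) \<le> (\<lambda>(m, l, n). ennreal (2 powr (real_of_int l))) (m', l', n')"
      by (simp add: ennreal_leI)
    also have "\<dots> \<le> (\<Sum>\<^sub>\<infinity>(m, l, n)\<in>P. ennreal (2 powr (real_of_int l)))"
      by (rule ennreal_infsum_ge[OF ml])
    finally show "ennreal (2 powr (real_of_int l)) \<le> (\<Sum>\<^sub>\<infinity>(m, l, n)\<in>P. ennreal (2 powr (real_of_int l)))" .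
  qed
qed

lemma stripOf_tree: "stripOf (tree m l n) = strip m l"
proof -
  have "measure lborel (dyI m l) = 2 powr (real_of_int l)"
    using meas_dyI by (simp add: measure_def)
  then show ?thesis unfolding stripOf_def strip_def proj_tree by simp
qed

theorem lemma4p3:
  fixes m l n :: int
  shows "mu (strip m l) = ennreal (2 powr (real_of_int l))
       \<and> ennreal (2 powr (real_of_int l)) = emeasure lborel (proj (strip m l))
       \<and> nu (tree m l n) = ennreal (2 powr (real_of_int l))
       \<and> ennreal (2 powr (real_of_int l)) = emeasure lborel (proj (tree m l n))
       \<and> stripOf (tree m l n) \<in> strips
       \<and> nu (tree m l n) = emeasure lborel (proj (tree m l n))
       \<and> emeasure lborel (proj (tree m l n)) = emeasure lborel (proj (stripOf (tree m l n)))
       \<and> emeasure lborel (proj (stripOf (tree m l n))) = mu (stripOf (tree m l n))"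
  by (auto simp: mu_strip nu_tree proj_strip proj_tree meas_dyI stripOf_tree strips_def)

end
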